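(* Let $P_n(x)$ be a real polynomial all of whose roots are real, with distinct roots $p_1<\dots<p_m$ of multiplicities $r_1,\dots,r_m$. Put $t_k=\sum_{l=1}^m r_lp_l^k$, $H_m=[t_{i+j-2}]_{i,j=1}^m$, and $\mathbf p_i=[1,p_i,\dots,p_i^{m-1}]$ (row vector). Then for all $i,j\in\{1,\dots,m\}$, $$r_j^{-1}-r_i^{-1}=(\mathbf p_j+\mathbf p_i)\,H_m^{-1}\,(\mathbf p_j-\mathbf p_i)^T.$$ *)

theory Defs
  imports "HOL-Computational_Algebra.Polynomial" "Jordan_Normal_Form.Gauss_Jordan_Elimination"
begin

definition root_list :: "real poly \<Rightarrow> real list" where
  "root_list P = sorted_list_of_set {x. poly P x = 0}"

definition power_sum :: "real poly \<Rightarrow> nat \<Rightarrow> real" where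
  "power_sum P k = (\<Sum>x\<in>{x. poly P x = 0}. real (order x P) * x ^ k)"

(* Hankel matrix H_m = [t_{i+j-2}]_{i,j=1..m}, here 0-indexed: entry (i,j) = t_{i+j} *)
definition hankel_mat :: "real poly \<Rightarrow> real mat" where
  "hankel_mat P = (let m = length (root_list P) in mat m m (\<lambda>(i,j). power_sum P (i + j)))"

definition pow_vec :: "nat \<Rightarrow> real \<Rightarrow> real vec" where
  "pow_vec m x = vec m (\<lambda>k. x ^ k)"

end

theory Submission imports Defs "Jordan_Normal_Form.Determinant" begin

lemma sum_set_nth: "distinct xs \<Longrightarrow> sum f (set xs) = (\<Sum>l<length xs. f (xs!l))"
  by (metis bij_betw_nth sum.reindex_bij_betw)

lemma mat3_entry: "(A::real mat) \<in> carrier_mat n n \<Longrightarrow> B \<in> carrier_mat n n \<Longrightarrow> C \<in> carrier_mat n n \<Longrightarrow> a < n \<Longrightarrow> b < n \<Longrightarrow>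
  (A * B * transpose_mat C) $$ (a,b) = row A a \<bullet> (B *\<^sub>v row C b)"
  by force

lemma vander_inv:
  fixes p :: "real list"
  assumes "distinct p"
  defines "V \<equiv> mat (length p) (length p) (\<lambda>(l,k). p!l ^ k)"
  shows "\<exists>U \<in> carrier_mat (length p) (length p). U * V = 1\<^sub>m (length p) \<and> V * U = 1\<^sub>m (length p)"
proof -
  let ?m = "length p"
  have Vc: "V \<in> carrier_mat ?m ?m" unfolding V_def by simp
  have "det V \<noteq> 0"
  proof
    assume "det V = 0"
    then obtain v where v: "v \<in> carrier_vec ?m" "v \<noteq> 0\<^sub>v ?m" "V *\<^sub>v v = 0\<^sub>v ?m"
      using det_0_iff_vec_prod_zero_field[OF Vc] by auto
    define q where "q = (\<Sum>k<?m. monom (v$k) k)"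
    have roots: "poly q (p!l) = 0" if "l < ?m" for l
    proof -
      have "poly q (p!l) = (\<Sum>k<?m. v$k * (p!l)^k)" unfolding q_def poly_sum poly_monom by simp
      also have "\<dots> = (V *\<^sub>v v) $ l" using that v(1) unfolding V_def
        by (auto simp: scalar_prod_def mult.commute intro!: sum.cong)
      finally show ?thesis using v(3) that by simp
    qed
    have "q = 0"
    proof (rule ccontr)
      assume q0: "q \<noteq> 0"
      have "set p \<subseteq> {x. poly q x = 0}" using roots by (auto simp: in_set_conv_nth)
      hence "card (set p) \<le> card {x. poly q x = 0}"
        by (intro card_mono poly_roots_finite[OF q0])
      also have "\<dots> \<le> degree q" by (rule card_poly_roots_bound[OF q0])
      finally have "?m \<le> degree q" using distinct_card[OF assms(1)] by simp
      moreover have "degree q < ?m"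
      proof -
        have "?m > 0"
        proof (rule ccontr)
          assume "\<not> ?m > 0"
          hence "v = 0\<^sub>v ?m" using v(1) by (intro eq_vecI) auto
          with v(2) show False by simp
        qed
        moreover have "degree q \<le> ?m - 1" unfolding q_def
        proof (intro degree_sum_le)
          fix k assume "k \<in> {..<?m}"
          thus "degree (monom (v$k) k) \<le> ?m - 1" using degree_monom_le[of "v$k" k] by simp
        qed simp
        ultimately show ?thesis by linarith
      qed
      ultimately show False by simp
    qed
    have "v = 0\<^sub>v ?m"
    proof (rule eq_vecI)
      fix k assume k: "k < dim_vec (0\<^sub>v ?m)"
      have "coeff q k = v $ k" unfolding q_def coeff_sum coeff_monom using k by simp
      thus "v $ k = 0\<^sub>v ?m $ k" using \<open>q = 0\<close> k by simp
    qed (use v(1) in simp)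
    with v(2) show False by simp
  qed
  from det_non_zero_imp_unit[OF Vc this, of undefined]
  obtain U where U: "U \<in> carrier_mat ?m ?m" "U * V = 1\<^sub>m ?m" "V * U = 1\<^sub>m ?m"
    unfolding Units_def ring_mat_def by auto
  thus ?thesis by blast
qed

theorem corollary1:
  fixes P :: "real poly"
  assumes "P \<noteq> 0"
    and "\<forall>z::complex. poly (map_poly complex_of_real P) z = 0 \<longrightarrow> z \<in> \<real>"
    and "i < length (root_list P)" and "j < length (root_list P)"
  shows "invertible_mat (hankel_mat P) \<and>
    (let m = length (root_list P); p = root_list P; Hinv = the (mat_inverse (hankel_mat P)) in
      1 / real (order (p ! j) P) - 1 / real (order (p ! i) P) =
      (pow_vec m (p ! j) + pow_vec m (p ! i)) \<bullet> (Hinv *\<^sub>v (pow_vec m (p ! j) - pow_vec m (p ! i))))"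
proof -
  define p where "p = root_list P"
  define m where "m = length p"
  define S where "S = {x. poly P x = 0}"
  have finS: "finite S" using poly_roots_finite[OF assms(1)] S_def by simp
  have setp: "set p = S" and dist: "distinct p" unfolding p_def root_list_def S_def
    using finS S_def by auto
  define r where "r l = real (order (p!l) P)" for l
  have rpos: "r l > 0" if "l < m" for l
  proof -
    have "p!l \<in> S" using setp that m_def nth_mem by blast
    hence "order (p!l) P \<noteq> 0" using order_root assms(1) S_def by auto
    thus ?thesis unfolding r_def by simp
  qed
  have ps: "power_sum P k = (\<Sum>l<m. r l * (p!l)^k)" for k
    unfolding power_sum_def r_def m_def S_def[symmetric] setp[symmetric]
    using sum_set_nth[OF dist] by simp
  define V where "V = mat m m (\<lambda>(l,k). p!l ^ k)"
  obtain U where U: "U \<in> carrier_mat m m" "U * V = 1\<^sub>m m" "V * U = 1\<^sub>m m"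
    using vander_inv[OF dist] unfolding V_def m_def by blast
  have Vc: "V \<in> carrier_mat m m" by (simp add: V_def)
  define D where "D = mat m m (\<lambda>(a,b). if a = b then r a else 0)"
  define Di where "Di = mat m m (\<lambda>(a,b). if a = b then 1 / r a else 0)"
  have Dc: "D \<in> carrier_mat m m" and Dic: "Di \<in> carrier_mat m m" by (simp_all add: D_def Di_def)
  have DDi: "D * Di = 1\<^sub>m m"
  proof (rule eq_matI)
    fix a b assume ab: "a < dim_row (1\<^sub>m m)" "b < dim_col (1\<^sub>m m)"
    have "(D * Di) $$ (a,b) = (\<Sum>c<m. (if a = c then r a else 0) * (if c = b then 1 / r c else 0))"
      using ab by (simp add: D_def Di_def scalar_prod_def atLeast0LessThan)
    also have "\<dots> = (\<Sum>c<m. if c = a then (if a = b then r a * (1 / r a) else 0) else 0)"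
      by (intro sum.cong) auto
    also have "\<dots> = 1\<^sub>m m $$ (a,b)" using ab rpos[of a] by (cases "a = b") auto
    finally show "(D * Di) $$ (a,b) = 1\<^sub>m m $$ (a,b)" .
  qed (auto simp: D_def Di_def)
  have DV: "(D * V) $$ (a,k) = r a * p!a ^ k" if "a < m" "k < m" for a k
  proof -
    have "(D * V) $$ (a,k) = (\<Sum>c<m. (if a = c then r a else 0) * p!c ^ k)"
      using that by (simp add: D_def V_def scalar_prod_def atLeast0LessThan)
    also have "\<dots> = (\<Sum>c<m. if c = a then r a * p!a ^ k else 0)"
      by (intro sum.cong) auto
    also have "\<dots> = r a * p!a ^ k" using that by simp
    finally show ?thesis .
  qed
  have H: "hankel_mat P = transpose_mat V * (D * V)"
  proof (rule eq_matI)
    fix a b assume ab: "a < dim_row (transpose_mat V * (D * V))" "b < dim_col (transpose_mat V * (D * V))"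
    hence ab': "a < m" "b < m" using Vc Dc by auto
    have "(transpose_mat V * (D * V)) $$ (a,b) = (\<Sum>l<m. p!l ^ a * (r l * p!l ^ b))"
      using ab' Vc Dc DV by (simp add: V_def scalar_prod_def atLeast0LessThan)
    also have "\<dots> = power_sum P (a+b)" unfolding ps by (intro sum.cong) (auto simp: power_add)
    finally show "hankel_mat P $$ (a,b) = (transpose_mat V * (D * V)) $$ (a,b)"
      using ab' unfolding hankel_mat_def p_def[symmetric] m_def[symmetric] by simp
  qed (auto simp: hankel_mat_def p_def[symmetric] m_def[symmetric] V_def D_def)
  define X where "X = U * Di * transpose_mat U"
  have Xc: "X \<in> carrier_mat m m" using U Dic by (simp add: X_def)
  have Hc: "hankel_mat P \<in> carrier_mat m m" using H Vc Dc by simp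
  have VUY: "V * (U * Y) = Y" if "Y \<in> carrier_mat m n" for Y n
    using assoc_mult_mat[OF Vc U(1) that, symmetric] U(3) that by simp
  have DDY: "D * (Di * Y) = Y" if "Y \<in> carrier_mat m n" for Y n
    using assoc_mult_mat[OF Dc Dic that, symmetric] DDi that by simp
  have DUc: "Di * transpose_mat U \<in> carrier_mat m m" using Dic U by simp
  have X2: "X = U * (Di * transpose_mat U)" unfolding X_def using U Dic by simp
  have "transpose_mat V * (D * V) * X = transpose_mat V * (D * (V * X))"
    using Vc Dc Xc assoc_mult_mat[of "transpose_mat V" m m "D * V" m X m] assoc_mult_mat[OF Dc Vc Xc]
    by simp
  also have "\<dots> = transpose_mat V * (D * (Di * transpose_mat U))"
    unfolding X2 VUY[OF DUc] ..
  also have "\<dots> = transpose_mat V * transpose_mat U"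
    using U by (simp add: DDY[of _ m])
  also have "\<dots> = 1\<^sub>m m" by (metis transpose_mult[OF U(1) Vc] U(2) transpose_one)
  finally have HX: "hankel_mat P * X = 1\<^sub>m m" using H by simp
  have XH: "X * hankel_mat P = 1\<^sub>m m" by (rule mat_mult_left_right_inverse[OF Hc Xc HX])
  have inv: "invertible_mat (hankel_mat P)"
    unfolding invertible_mat_def inverts_mat_def using HX XH Hc Xc by auto
  have "det (hankel_mat P) \<noteq> 0"
    using arg_cong[OF HX, of det] det_mult[OF Hc Xc] by auto
  from det_non_zero_imp_unit[OF Hc this, of undefined]
  have "mat_inverse (hankel_mat P) \<noteq> None" using mat_inverse(1)[OF Hc, of undefined] by blast
  then obtain B where B: "mat_inverse (hankel_mat P) = Some B" by auto
  from mat_inverse(2)[OF Hc B] have B': "B * hankel_mat P = 1\<^sub>m m" "B \<in> carrier_mat m m" by auto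
  have "B = B * (hankel_mat P * X)" using HX B' by simp
  also have "\<dots> = X" using B' Hc Xc by (simp flip: assoc_mult_mat)
  finally have BX: "the (mat_inverse (hankel_mat P)) = X" using B by simp
  have VXV: "V * X * transpose_mat V = Di"
  proof -
    have "V * X = Di * transpose_mat U" unfolding X2 VUY[OF DUc] ..
    hence "V * X * transpose_mat V = Di * (transpose_mat U * transpose_mat V)"
      using assoc_mult_mat[OF Dic, of "transpose_mat U" m "transpose_mat V" m] U Vc by simp
    also have "\<dots> = Di" by (metis transpose_mult[OF Vc U(1)] U(3) transpose_one right_mult_one_mat Dic)
    finally show ?thesis .
  qed
  have rowV: "row V a = pow_vec m (p!a)" if "a < m" for a
    using that by (intro eq_vecI) (auto simp: V_def pow_vec_def)
  have form: "pow_vec m (p!a) \<bullet> (X *\<^sub>v pow_vec m (p!b)) = (if a = b then 1 / r a else 0)"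
    if "a < m" "b < m" for a b
    using mat3_entry[OF Vc Xc Vc that] VXV rowV that by (simp add: Di_def)
  have ij: "i < m" "j < m" using assms(3,4) by (simp_all add: m_def p_def)
  have pc: "pow_vec m x \<in> carrier_vec m" for x by (simp add: pow_vec_def)
  let ?a = "pow_vec m (p!j)" let ?b = "pow_vec m (p!i)"
  have "(?a + ?b) \<bullet> (X *\<^sub>v (?a - ?b)) =
     (?a \<bullet> (X *\<^sub>v ?a) - ?a \<bullet> (X *\<^sub>v ?b)) + (?b \<bullet> (X *\<^sub>v ?a) - ?b \<bullet> (X *\<^sub>v ?b))"
    using pc Xc
    by (simp add: mult_minus_distrib_mat_vec[OF Xc] add_scalar_prod_distrib[of _ m]
        scalar_prod_minus_distrib[of _ m])
  also have "\<dots> = 1 / r j - 1 / r i" using form ij by auto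
  finally have main: "(?a + ?b) \<bullet> (X *\<^sub>v (?a - ?b)) = 1 / r j - 1 / r i" .
  show ?thesis using inv main BX unfolding Let_def p_def[symmetric] m_def[symmetric] r_def by simp
qed

end
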